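(* Let $q\in[1,2]$ and let $R:\mathbb{R}\to\mathbb{R}$ be a $C^2$ Legendre function that is inversely $\mu$-coercive for some $\mu>0$. Then there exists an invertible reparameterization $g:\mathbb{R}\to\mathbb{R}$ such that, for every differentiable $f:\mathbb{R}\to\mathbb{R}$, if $x_t$ solves the one-dimensional steepest mirror flow $d\,R'(x_t)=-\operatorname{sign}(f'(x_t))|f'(x_t)|^{q-1}dt$, then $w_t:=g^{-1}(x_t)$ solves the steepest flow $dw_t=-\operatorname{sign}\left(\tfrac{d}{dw}f(g(w_t))\right)\left|\tfrac{d}{dw}f(g(w_t))\right|^{q-1}dt$; in particular $x_t=g(w_t)$.
   Context: Legendre function: differentiable convex $R$, strictly convex on the interior of its domain, with $|R'(x_i)|\to\infty$ along sequences tending to the boundary of its domain. In one dimension, inverse $\mu$-coercivity means $x\,(R''(x))^{-1}x\ge\mu x^2$ for all $x$. *)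

theory Defs
  imports "HOL-Analysis.Analysis"
begin

definition strictly_convex_on :: "real set \<Rightarrow> (real \<Rightarrow> real) \<Rightarrow> bool" where
  "strictly_convex_on S R \<longleftrightarrow> convex S \<and>
     (\<forall>x\<in>S. \<forall>y\<in>S. x \<noteq> y \<longrightarrow> (\<forall>u::real. 0 < u \<and> u < 1 \<longrightarrow>
        R (u * x + (1 - u) * y) < u * R x + (1 - u) * R y))"

definition C2_real :: "(real \<Rightarrow> real) \<Rightarrow> bool" where
  "C2_real R \<longleftrightarrow> (\<forall>x. R differentiable (at x)) \<and> (\<forall>x. deriv R differentiable (at x))
     \<and> continuous_on UNIV (deriv (deriv R))"

text \<open>Legendre function with domain the whole real line: differentiable, convex,
  strictly convex on the interior of the domain (= UNIV), and |R'| blows up along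
  sequences tending to the boundary of the domain, here read as +/- infinity.\<close>
definition legendre_real :: "(real \<Rightarrow> real) \<Rightarrow> bool" where
  "legendre_real R \<longleftrightarrow> (\<forall>x. R differentiable (at x)) \<and> convex_on UNIV R
     \<and> strictly_convex_on (interior UNIV) R
     \<and> filterlim (\<lambda>x. \<bar>deriv R x\<bar>) at_top at_infinity"

definition inv_coercive :: "real \<Rightarrow> (real \<Rightarrow> real) \<Rightarrow> bool" where
  "inv_coercive \<mu> R \<longleftrightarrow> (\<forall>x v. v * inverse (deriv (deriv R) x) * v \<ge> \<mu> * v\<^sup>2)"

definition mirror_flow_sol :: "real \<Rightarrow> (real \<Rightarrow> real) \<Rightarrow> (real \<Rightarrow> real) \<Rightarrow> (real \<Rightarrow> real) \<Rightarrow> bool" where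
  "mirror_flow_sol q R f x \<longleftrightarrow> (\<forall>t\<ge>0.
     ((\<lambda>s. deriv R (x s)) has_real_derivative
        (- sgn (deriv f (x t)) * \<bar>deriv f (x t)\<bar> powr (q - 1))) (at t within {0..}))"

definition steepest_flow_sol :: "real \<Rightarrow> (real \<Rightarrow> real) \<Rightarrow> (real \<Rightarrow> real) \<Rightarrow> bool" where
  "steepest_flow_sol q h w \<longleftrightarrow> (\<forall>t\<ge>0.
     (w has_real_derivative
        (- sgn (deriv h (w t)) * \<bar>deriv h (w t)\<bar> powr (q - 1))) (at t within {0..}))"

end

theory Submission
  imports Defs
begin

lemma smono_of_deriv:
  fixes P :: "real \<Rightarrow> real"
  assumes "\<And>z. DERIV P z :> P' z" "\<And>z. P' z > 0"
  shows "strict_mono P"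
  unfolding strict_mono_def
  by (metis DERIV_pos_imp_increasing assms)

lemma inv_deriv:
  fixes P :: "real \<Rightarrow> real"
  assumes d: "\<And>z. DERIV P z :> P' z" and pos: "\<And>z. P' z > 0"
  shows "DERIV (inv P) (P z) :> inverse (P' z)"
proof -
  have sm: "strict_mono P" using smono_of_deriv assms by blast
  hence inj: "inj P" using strict_mono_imp_inj_on by blast
  have cont: "\<And>w. isCont P w" using d DERIV_isCont by blast
  hence con: "continuous_on S P" for S by (simp add: continuous_at_imp_continuous_on)
  show ?thesis
  proof (rule DERIV_inverse_function[where a="P (z-1)" and b="P (z+1)"])
    show "DERIV P (inv P (P z)) :> P' z" using inj d by simp
    show "P' z \<noteq> 0" using pos[of z] by simp
    show "P (z - 1) < P z" "P z < P (z+1)" using sm by (auto simp: strict_mono_def)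
    show "P (inv P y) = y" if hy: "P (z - 1) < y" "y < P (z + 1)" for y
    proof -
      obtain s where "P s = y" using IVT'[of P "z-1" y "z+1", OF _ _ _ con] hy by force
      thus ?thesis using inj by auto
    qed
    show "isCont (inv P) (P z)"
      by (rule isCont_inverse_function[where d=1]) (use inj cont in auto)
  qed
qed

lemma antideriv_UNIV:
  fixes \<phi> :: "real \<Rightarrow> real"
  assumes c: "continuous_on UNIV \<phi>"
  shows "\<exists>h. \<forall>z. DERIV h z :> \<phi> z"
proof -
  define h where "h x = (if 0 \<le> x then integral {0..x} \<phi> else - integral {x..0} \<phi>)" for x
  have "DERIV h z :> \<phi> z" for z
  proof -
    define a where "a = - (\<bar>z\<bar> + 1)"
    define b where "b = \<bar>z\<bar> + 1"
    have ca: "continuous_on {a..b} \<phi>" using c continuous_on_subset by blast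
    have eq: "h y = integral {a..y} \<phi> - integral {a..0} \<phi>" if "y \<in> {a..b}" for y
    proof (cases "0 \<le> y")
      case True
      have "integral {a..0} \<phi> + integral {0..y} \<phi> = integral {a..y} \<phi>"
        using Henstock_Kurzweil_Integration.integral_combine[where a=a and c=0 and b=y and f=\<phi>] True a_def that integrable_continuous_real[OF continuous_on_subset[OF c]] by auto
      then show ?thesis using True h_def by auto
    next
      case False
      have "integral {a..y} \<phi> + integral {y..0} \<phi> = integral {a..0} \<phi>"
        using Henstock_Kurzweil_Integration.integral_combine[where a=a and c=y and b=0 and f=\<phi>] False a_def that integrable_continuous_real[OF continuous_on_subset[OF c]] by auto
      then show ?thesis using False h_def by auto
    qed
    have "((\<lambda>y. integral {a..y} \<phi> - integral {a..0} \<phi>) has_real_derivative \<phi> z) (at z within {a..b})"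
    proof -
      have "z \<in> {a..b}" using a_def b_def by auto
      from DERIV_diff[OF integral_has_real_derivative[OF ca this] DERIV_const[of "integral {a..0} \<phi>"]]
      show ?thesis by simp
    qed
    then have "(h has_real_derivative \<phi> z) (at z within {a..b})"
      by (rule has_field_derivative_transform_within[where d=1]) (use eq a_def b_def in auto)
    then have "(h has_real_derivative \<phi> z) (at z within {a<..<b})"
      by (rule has_field_derivative_subset) auto
    moreover have "z \<in> {a<..<b}" using a_def b_def by auto
    ultimately show ?thesis using at_within_open[of z "{a<..<b}"] by auto
  qed
  then show ?thesis by blast
qed

theorem theorem14:
  fixes q \<mu> :: real and R :: "real \<Rightarrow> real"
  assumes "1 \<le> q" and "q \<le> 2"
    and "C2_real R" and "legendre_real R"
    and "\<mu> > 0" and "inv_coercive \<mu> R"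
  shows "\<exists>g :: real \<Rightarrow> real. bij g \<and> (\<forall>w. g differentiable (at w)) \<and>
           (\<forall>f :: real \<Rightarrow> real. (\<forall>y. f differentiable (at y)) \<longrightarrow>
             (\<forall>x :: real \<Rightarrow> real. mirror_flow_sol q R f x \<longrightarrow>
                steepest_flow_sol q (f \<circ> g) (\<lambda>t. inv g (x t)) \<and>
                (\<forall>t\<ge>0. x t = g (inv g (x t)))))"
proof -
  define R1 where "R1 = deriv R"
  define R2 where "R2 = deriv (deriv R)"
  have dR1: "DERIV R1 z :> R2 z" for z
    using assms(3) unfolding C2_real_def R1_def R2_def
    using DERIV_deriv_iff_real_differentiable by blast
  have cR2: "continuous_on UNIV R2" using assms(3) unfolding C2_real_def R2_def by blast
  have R2pos: "R2 z > 0" and R2le: "R2 z \<le> 1/\<mu>" for z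
  proof -
    have i: "inverse (R2 z) \<ge> \<mu>" using assms(6) unfolding inv_coercive_def R2_def
      by (metis mult_1 mult_1_right power_one)
    show "R2 z > 0"
    proof (rule ccontr)
      assume "\<not> R2 z > 0"
      then have "inverse (R2 z) \<le> 0" by simp
      then show False using i assms(5) by linarith
    qed
    then show "R2 z \<le> 1/\<mu>" using i assms(5)
      by (simp add: field_simps)
  qed
  have q0: "q > 0" using assms(1) by simp
  define \<phi> where "\<phi> z = R2 z powr (1/q)" for z
  have c\<phi>: "continuous_on UNIV \<phi>" unfolding \<phi>_def
    by (rule continuous_on_powr) (use cR2 R2pos in \<open>auto intro: continuous_intros simp: less_irrefl\<close>, metis less_irrefl)
  have \<phi>pos: "\<phi> z > 0" for z using R2pos[of z] unfolding \<phi>_def by simp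
  obtain h where dh: "\<And>z. DERIV h z :> \<phi> z" using antideriv_UNIV[OF c\<phi>] by blast
  have smh: "strict_mono h" using smono_of_deriv[OF dh \<phi>pos] .
  have smR1: "strict_mono R1" using smono_of_deriv[OF dR1 R2pos] .
  define c where "c = \<mu> powr (1 - 1/q)"
  have cpos: "c > 0" using assms(5) c_def by simp
  have \<phi>ge: "\<phi> z \<ge> c * R2 z" for z
  proof -
    have "R2 z powr (1/q - 1) * R2 z = R2 z powr (1/q - 1) * R2 z powr 1" using R2pos[of z] by simp
    also have "\<dots> = R2 z powr (1/q - 1 + 1)" by (rule powr_add[symmetric])
    also have "\<dots> = \<phi> z" unfolding \<phi>_def by simp
    finally have e: "\<phi> z = R2 z powr (1/q - 1) * R2 z" by simp
    have "(1/\<mu>) powr (1/q - 1) \<le> R2 z powr (1/q - 1)"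
      by (rule powr_mono2') (use R2pos R2le assms(1) in \<open>auto simp: field_simps\<close>)
    moreover have "(1/\<mu>) powr (1/q - 1) = c" unfolding c_def using assms(5)
      by (simp add: powr_divide powr_minus_divide[symmetric] powr_minus)
    ultimately show ?thesis using e R2pos[of z] by (simp add: mult_right_mono)
  qed
  define k where "k z = h z - c * R1 z" for z
  have dk: "DERIV k z :> \<phi> z - c * R2 z" for z
    unfolding k_def by (intro derivative_eq_intros dh dR1) (auto simp: dh dR1)
  have kmono: "k a \<le> k b" if "a \<le> b" for a b
  proof (rule DERIV_nonneg_imp_increasing_open[OF that])
    show "\<exists>y. DERIV k x :> y \<and> 0 \<le> y" for x using dk \<phi>ge by force
    show "continuous_on {a..b} k"
      using dk DERIV_isCont continuous_at_imp_continuous_on by blast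
  qed
  have ch: "continuous_on S h" for S
    using dh DERIV_isCont continuous_at_imp_continuous_on by blast
  have lim: "filterlim (\<lambda>x. \<bar>R1 x\<bar>) at_top at_infinity"
    using assms(4) unfolding legendre_real_def R1_def by blast
  have unb: "(\<exists>z. h z \<ge> M) \<and> (\<exists>z. h z \<le> M)" for M
  proof -
    define B where "B = \<bar>R1 0\<bar> + (\<bar>M\<bar> + \<bar>h 0\<bar>) / c + 1"
    have "eventually (\<lambda>x. \<bar>R1 x\<bar> \<ge> B) at_infinity"
      using lim unfolding filterlim_at_top by blast
    then obtain b where b: "\<And>x::real. norm x \<ge> b \<Longrightarrow> \<bar>R1 x\<bar> \<ge> B"
      unfolding eventually_at_infinity by blast
    define z where "z = max b 0"
    have z0: "z \<ge> 0" and zb: "\<bar>R1 z\<bar> \<ge> B" "\<bar>R1 (-z)\<bar> \<ge> B" using b[of z] b[of "-z"] z_def by auto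
    have "R1 0 \<le> R1 z" "R1 (-z) \<le> R1 0" using smR1 z0 by (simp_all add: strict_mono_less_eq)
    moreover have Bg: "B > \<bar>R1 0\<bar>"
    proof -
      have "(\<bar>M\<bar> + \<bar>h 0\<bar>) / c \<ge> 0" using cpos by simp
      then show ?thesis unfolding B_def by linarith
    qed
    ultimately have r1: "R1 z \<ge> B" and r2: "R1 (-z) \<le> -B" using zb by (auto simp: abs_if split: if_splits)
    have k1: "k 0 \<le> k z" "k (-z) \<le> k 0" using kmono z0 by auto
    have BB: "c * (B - \<bar>R1 0\<bar>) = \<bar>M\<bar> + \<bar>h 0\<bar> + c" using cpos unfolding B_def
      by (simp add: field_simps)
    have "h z \<ge> h 0 + c * (R1 z - R1 0)" using k1 unfolding k_def by (simp add: algebra_simps)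
    moreover have "c * (R1 z - R1 0) \<ge> c * (B - \<bar>R1 0\<bar>)"
    proof -
      have "R1 z - R1 0 \<ge> B - \<bar>R1 0\<bar>" using r1 abs_ge_self[of "R1 0"] by linarith
      then show ?thesis by (rule mult_left_mono) (use cpos in simp)
    qed
    ultimately have hz: "h z \<ge> M" using BB cpos by linarith
    have "h (-z) \<le> h 0 + c * (R1 (-z) - R1 0)" using k1 unfolding k_def by (simp add: algebra_simps)
    moreover have "c * (R1 (-z) - R1 0) \<le> - c * (B - \<bar>R1 0\<bar>)"
    proof -
      have "R1 (-z) - R1 0 \<le> - (B - \<bar>R1 0\<bar>)" using r2 abs_ge_minus_self[of "R1 0"] by linarith
      then have "c * (R1 (-z) - R1 0) \<le> c * (- (B - \<bar>R1 0\<bar>))" by (rule mult_left_mono) (use cpos in simp)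
      then show ?thesis by (simp add: algebra_simps)
    qed
    ultimately have "h (-z) \<le> M" using BB cpos by linarith
    with hz show ?thesis by blast
  qed
  have surjh: "surj h"
  proof -
    have "\<exists>x. h x = y" for y
    proof -
      obtain z1 z2 where z1: "h z1 \<le> y" and z2: "h z2 \<ge> y" using unb by blast
      have "z1 \<le> z2"
      proof (rule ccontr)
        assume "\<not> z1 \<le> z2" then have "h z2 < h z1" using smh by (simp add: strict_mono_less)
        then show False using z1 z2 by simp
      qed
      then show ?thesis using IVT'[of h z1 y z2, OF z1 z2 _ ch] by blast
    qed
    then show ?thesis by (metis surjI)
  qed
  have injh: "inj h" using smh strict_mono_imp_inj_on by blast
  have bijh: "bij h" using injh surjh bij_def by blast
  define g where "g = inv h"
  have bijg: "bij g" unfolding g_def using bijh bij_imp_bij_inv by blast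
  have invg: "inv g = h" unfolding g_def using bijh inv_inv_eq by blast
  have hg: "h (g y) = y" for y unfolding g_def using surjh surj_f_inv_f by metis
  have gh: "g (h y) = y" for y unfolding g_def using injh inv_f_f by metis
  have dg: "DERIV g y :> inverse (\<phi> (g y))" for y
    using inv_deriv[OF dh \<phi>pos, of "g y"] unfolding hg g_def[symmetric] .
  have injR1: "inj R1" using smR1 strict_mono_imp_inj_on by blast
  have dQ: "DERIV (inv R1) (R1 z) :> inverse (R2 z)" for z using inv_deriv[OF dR1 R2pos] .
  show ?thesis
  proof (intro exI[of _ g] conjI allI impI)
    show "bij g" by fact
    show "g differentiable at w" for w using dg real_differentiable_def by blast
    show "x t = g (inv g (x t))" for x t using gh invg by simp
    fix f x assume fd: "\<forall>y. f differentiable at y" and mf: "mirror_flow_sol q R f x"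
    show "steepest_flow_sol q (f \<circ> g) (\<lambda>t. inv g (x t))"
      unfolding steepest_flow_sol_def invg
    proof (intro allI impI)
      fix t :: real assume t0: "0 \<le> t"
      define a where "a = deriv f (x t)"
      define E where "E = - sgn a * \<bar>a\<bar> powr (q - 1)"
      have d1: "((\<lambda>s. R1 (x s)) has_real_derivative E) (at t within {0..})"
        using mf t0 unfolding mirror_flow_sol_def R1_def E_def a_def by blast
      have d2: "((\<lambda>s. h (inv R1 (R1 (x s)))) has_real_derivative \<phi> (inv R1 (R1 (x t))) * inverse (R2 (x t)) * E) (at t within {0..})"
        using DERIV_chain2[OF dh DERIV_chain2[OF dQ d1]] by (simp add: mult.assoc)
      have d3: "((\<lambda>s. h (x s)) has_real_derivative \<phi> (x t) * inverse (R2 (x t)) * E) (at t within {0..})"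
        using d2 injR1 by simp
      have df: "DERIV f (x t) :> a" using fd DERIV_deriv_iff_real_differentiable a_def by blast
      have "DERIV (f \<circ> g) (h (x t)) :> a * inverse (\<phi> (x t))"
        using DERIV_chain[of f a "g" "h (x t)"] df dg[of "h (x t)"] gh by simp
      then have dfg: "deriv (f \<circ> g) (h (x t)) = a * inverse (\<phi> (x t))" by (rule DERIV_imp_deriv)
      define r where "r = R2 (x t)"
      have r0: "r > 0" using R2pos r_def by simp
      have key: "\<phi> (x t) * inverse r * E = - sgn (a * inverse (\<phi> (x t))) * \<bar>a * inverse (\<phi> (x t))\<bar> powr (q - 1)"
      proof -
        have p: "\<phi> (x t) = r powr (1/q)" unfolding \<phi>_def r_def ..
        have s: "sgn (a * inverse (r powr (1/q))) = sgn a" using r0 by (simp add: sgn_mult)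
        have ab: "\<bar>a * inverse (r powr (1/q))\<bar> powr (q - 1) = \<bar>a\<bar> powr (q-1) * r powr ((1 - q)/q)"
        proof -
          have "\<bar>a * inverse (r powr (1/q))\<bar> = \<bar>a\<bar> * r powr (- (1/q))" using r0
            by (simp add: abs_mult powr_minus)
          then have "\<bar>a * inverse (r powr (1/q))\<bar> powr (q - 1) = \<bar>a\<bar> powr (q-1) * (r powr (- (1/q))) powr (q - 1)"
            by (simp add: powr_mult)
          also have "(r powr (- (1/q))) powr (q - 1) = r powr ((1 - q)/q)"
          proof -
            have "- (1/q) * (q - 1) = (1 - q)/q" using q0 by (simp add: field_simps)
            then show ?thesis by (simp add: powr_powr)
          qed
          finally show ?thesis .
        qed
        have l: "r powr (1/q) * inverse r = r powr ((1 - q)/q)"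
        proof -
          have "r powr (1/q) * inverse r = r powr (1/q) * r powr (-1)" using r0 by (simp add: powr_minus)
          also have "\<dots> = r powr (1/q + (-1))" by (rule powr_add[symmetric])
          also have "\<dots> = r powr (1/q - 1)" by simp
          also have "1/q - 1 = (1 - q)/q" using q0 by (simp add: field_simps)
          finally show ?thesis .
        qed
        show ?thesis unfolding p s ab E_def using l by (simp add: algebra_simps)
      qed
      show "((\<lambda>t. h (x t)) has_real_derivative - sgn (deriv (f \<circ> g) (h (x t))) * \<bar>deriv (f \<circ> g) (h (x t))\<bar> powr (q - 1)) (at t within {0..})"
        using d3 unfolding dfg key[symmetric] r_def .
    qed
  qed
qed

end
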